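(* Let $\tau$ be a good tree-like abstract path of weight $2$. Then $\tau$ has at most one good break. Furthermore: (i) if $\tau$ has exactly one good break, then there is exactly one marker of $\tau$ at which a gluing move applies; (ii) if $\tau$ has no good break, then there are exactly two markers of $\tau$ at which a gluing move applies.
   Context: $\mathbb F=\{0,1\}$, $\mathbb N=\{0,1,2,\dots\}$. Abstract vertex types: $o$ (interior), $u$ (unstable), $s$ (stable); $u,s$ are boundary. An abstract edge is $\varepsilon=(\mu,(o_1,u_1,s_1),(o_2,u_2,s_2))\in\mathbb F\times\mathbb N^3\times\mathbb N^3$ with: if $\mu=0$ then $s_1=u_2=0$; if $\mu=1$ then $o_1=o_2=0$ (interior if $\mu=0$, boundary if $\mu=1$). Weight: $w(\varepsilon)=1$ if $\mu=0$, $2-s_1-u_2$ if $\mu=1$. An abstract path $\tau=(T,\tau,\sigma)$: a non-empty finite directed tree $T=(V,E)$ (nodes; arrows, or breaks), $\tau:V\to$ abstract edges, $\sigma:E\to\{o,u,s\}$, such that for each node $v$ and type $X$, $X_1(v)\ge|\{e:t(e)=v,\sigma(e)=X\}|$, $X_2(v)\ge|\{e:s(e)=v,\sigma(e)=X\}|$, with $X_i(v)$ the entries of $\tau(v)$. Ends: $X_1(\tau)=\sum_vX_1(v)-|\sigma^{-1}(X)|$, $X_2(\tau)=\sum_vX_2(v)-|\sigma^{-1}(X)|$. Nodes are interior/boundary by $\mu(v)$. Weight $w(\tau)=\sum_vw(\tau(v))$. $\tau$ is legal if $s_1(\tau)=u_2(\tau)=0$; tree-like if $o_2(v)+u_2(v)+s_2(v)=1$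 for all $v$; good if $s_1(\tau)=s_2(\tau)=0$. A break $e$ is good if $\sigma(e)\in\{o,u\}$. Subpath = restriction to a non-empty subtree. $\mathrm{Star}^o(v)$ is the subtree induced by $v$ and its adjacent interior nodes. A marker is a node or arrow. Gluing moves (contract a subtree $T'$ to one node $v^*$, reattaching arrows to $v^*$, with $\tau(v^* )=(\mu^*,(o_1(\tau'),u_1(\tau'),s_1(\tau')),(o_2(\tau'),u_2(\tau'),s_2(\tau')))$, $\tau'$ the subpath on $T'$): (Ia) at an arrow both of whose endpoints are interior nodes, contract it, $\mu^*=0$; (Ib) at a boundary node $v$ whose subpath on $\mathrm{Star}^o(v)$ is legal, contract $\mathrm{Star}^o(v)$, $\mu^*=0$; (II) at an arrow both of whose endpoints are boundary nodes, contract it, $\mu^*=1$. *)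

theory Defs
  imports Main
begin

datatype vtype = Ot | Ut | St   (* o (interior), u (unstable), s (stable) *)

text \<open>An abstract edge (mu,(o1,u1,s1),(o2,u2,s2)); mu is an element of F = {0,1},
  encoded as a natural number with mu \<le> 1.\<close>
type_synonym aedge = "nat \<times> (nat \<times> nat \<times> nat) \<times> (nat \<times> nat \<times> nat)"

definition amu :: "aedge \<Rightarrow> nat" where
  "amu e = fst e"

fun pick :: "nat \<times> nat \<times> nat \<Rightarrow> vtype \<Rightarrow> nat" where
  "pick (a, b, c) Ot = a"
| "pick (a, b, c) Ut = b"
| "pick (a, b, c) St = c"

definition ent1 :: "aedge \<Rightarrow> vtype \<Rightarrow> nat" where
  "ent1 e X = pick (fst (snd e)) X"

definition ent2 :: "aedge \<Rightarrow> vtype \<Rightarrow> nat" where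
  "ent2 e X = pick (snd (snd e)) X"

definition is_aedge :: "aedge \<Rightarrow> bool" where
  "is_aedge e \<longleftrightarrow> amu e \<le> 1 \<and>
     (amu e = 0 \<longrightarrow> ent1 e St = 0 \<and> ent2 e Ut = 0) \<and>
     (amu e = 1 \<longrightarrow> ent1 e Ot = 0 \<and> ent2 e Ot = 0)"

definition aedge_weight :: "aedge \<Rightarrow> int" where
  "aedge_weight e = (if amu e = 0 then 1 else 2 - int (ent1 e St) - int (ent2 e Ut))"

text \<open>A path is given by a node set V, a set of arrows E \<subseteq> V \<times> V
  (arrow (a,b) has source a and target b), a labelling tau of nodes by abstract
  edges and a labelling sigma of arrows by vertex types.
  (V,E) is a directed tree: V finite nonempty, underlying undirected graph connected
  with |E| = |V| - 1 (hence acyclic, no loops, no antiparallel pairs).\<close>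

definition dtree :: "'v set \<Rightarrow> ('v \<times> 'v) set \<Rightarrow> bool" where
  "dtree V E \<longleftrightarrow> finite V \<and> V \<noteq> {} \<and> E \<subseteq> V \<times> V \<and>
     (\<forall>a\<in>V. \<forall>b\<in>V. (a, b) \<in> (E \<union> E\<inverse>)\<^sup>*) \<and> card E + 1 = card V"

definition abstract_path ::
  "'v set \<Rightarrow> ('v \<times> 'v) set \<Rightarrow> ('v \<Rightarrow> aedge) \<Rightarrow> ('v \<times> 'v \<Rightarrow> vtype) \<Rightarrow> bool" where
  "abstract_path V E tau sigma \<longleftrightarrow> dtree V E \<and> (\<forall>v\<in>V. is_aedge (tau v)) \<and>
     (\<forall>v\<in>V. \<forall>X. ent1 (tau v) X \<ge> card {e\<in>E. snd e = v \<and> sigma e = X} \<and>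
                 ent2 (tau v) X \<ge> card {e\<in>E. fst e = v \<and> sigma e = X})"

definition end1 :: "'v set \<Rightarrow> ('v \<times> 'v) set \<Rightarrow> ('v \<Rightarrow> aedge) \<Rightarrow> ('v \<times> 'v \<Rightarrow> vtype) \<Rightarrow> vtype \<Rightarrow> int" where
  "end1 V E tau sigma X = (\<Sum>v\<in>V. int (ent1 (tau v) X)) - int (card {e\<in>E. sigma e = X})"

definition end2 :: "'v set \<Rightarrow> ('v \<times> 'v) set \<Rightarrow> ('v \<Rightarrow> aedge) \<Rightarrow> ('v \<times> 'v \<Rightarrow> vtype) \<Rightarrow> vtype \<Rightarrow> int" where
  "end2 V E tau sigma X = (\<Sum>v\<in>V. int (ent2 (tau v) X)) - int (card {e\<in>E. sigma e = X})"

definition path_weight :: "'v set \<Rightarrow> ('v \<Rightarrow> aedge) \<Rightarrow> int" where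
  "path_weight V tau = (\<Sum>v\<in>V. aedge_weight (tau v))"

definition legal :: "'v set \<Rightarrow> ('v \<times> 'v) set \<Rightarrow> ('v \<Rightarrow> aedge) \<Rightarrow> ('v \<times> 'v \<Rightarrow> vtype) \<Rightarrow> bool" where
  "legal V E tau sigma \<longleftrightarrow> end1 V E tau sigma St = 0 \<and> end2 V E tau sigma Ut = 0"

definition tree_like :: "'v set \<Rightarrow> ('v \<Rightarrow> aedge) \<Rightarrow> bool" where
  "tree_like V tau \<longleftrightarrow> (\<forall>v\<in>V. ent2 (tau v) Ot + ent2 (tau v) Ut + ent2 (tau v) St = 1)"

definition good_path :: "'v set \<Rightarrow> ('v \<times> 'v) set \<Rightarrow> ('v \<Rightarrow> aedge) \<Rightarrow> ('v \<times> 'v \<Rightarrow> vtype) \<Rightarrow> bool" where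
  "good_path V E tau sigma \<longleftrightarrow> end1 V E tau sigma St = 0 \<and> end2 V E tau sigma St = 0"

definition good_breaks :: "('v \<times> 'v) set \<Rightarrow> ('v \<times> 'v \<Rightarrow> vtype) \<Rightarrow> ('v \<times> 'v) set" where
  "good_breaks E sigma = {e\<in>E. sigma e \<in> {Ot, Ut}}"

definition sub_arrows :: "('v \<times> 'v) set \<Rightarrow> 'v set \<Rightarrow> ('v \<times> 'v) set" where
  "sub_arrows E W = E \<inter> (W \<times> W)"

definition interior :: "('v \<Rightarrow> aedge) \<Rightarrow> 'v \<Rightarrow> bool" where
  "interior tau v \<longleftrightarrow> amu (tau v) = 0"

definition boundary :: "('v \<Rightarrow> aedge) \<Rightarrow> 'v \<Rightarrow> bool" where
  "boundary tau v \<longleftrightarrow> amu (tau v) = 1"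

definition star_o :: "'v set \<Rightarrow> ('v \<times> 'v) set \<Rightarrow> ('v \<Rightarrow> aedge) \<Rightarrow> 'v \<Rightarrow> 'v set" where
  "star_o V E tau v = insert v {w\<in>V. ((v, w) \<in> E \<or> (w, v) \<in> E) \<and> interior tau w}"

text \<open>Markers are nodes (Inl v) or arrows (Inr e).\<close>
definition gluing_markers ::
  "'v set \<Rightarrow> ('v \<times> 'v) set \<Rightarrow> ('v \<Rightarrow> aedge) \<Rightarrow> ('v \<times> 'v \<Rightarrow> vtype) \<Rightarrow> ('v + ('v \<times> 'v)) set" where
  "gluing_markers V E tau sigma =
     \<comment> \<open>(Ib)\<close>
     {Inl v | v. v \<in> V \<and> boundary tau v \<and>
        legal (star_o V E tau v) (sub_arrows E (star_o V E tau v)) tau sigma}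
   \<union> \<comment> \<open>(Ia)\<close>
     {Inr e | e. e \<in> E \<and> interior tau (fst e) \<and> interior tau (snd e)}
   \<union> \<comment> \<open>(II)\<close>
     {Inr e | e. e \<in> E \<and> boundary tau (fst e) \<and> boundary tau (snd e)}"

end

theory Submission
  imports Defs
begin

lemma sum_card_fst:
  assumes "finite E" "E \<subseteq> V \<times> V" "finite V"
  shows "(\<Sum>v\<in>V. card {e\<in>E. fst e = v \<and> P e}) = card {e\<in>E. P e}"
proof -
  have "{e\<in>E. P e} = (\<Union>v\<in>V. {e\<in>E. fst e = v \<and> P e})" using assms(2) by auto
  then have "card {e\<in>E. P e} = (\<Sum>v\<in>V. card {e\<in>E. fst e = v \<and> P e})"
    using assms by (simp add: card_UN_disjoint, subst card_UN_disjoint) auto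
  then show ?thesis by simp
qed

lemma sum_card_snd:
  assumes "finite E" "E \<subseteq> V \<times> V" "finite V"
  shows "(\<Sum>v\<in>V. card {e\<in>E. snd e = v \<and> P e}) = card {e\<in>E. P e}"
proof -
  have "{e\<in>E. P e} = (\<Union>v\<in>V. {e\<in>E. snd e = v \<and> P e})" using assms(2) by auto
  then have "card {e\<in>E. P e} = (\<Sum>v\<in>V. card {e\<in>E. snd e = v \<and> P e})"
    using assms by (simp, subst card_UN_disjoint) auto
  then show ?thesis by simp
qed

lemma closure_conn:
  assumes "dtree V E" "x \<in> V" "y \<in> V" "x \<in> C"
    and cl: "\<And>p q. (p, q) \<in> E \<Longrightarrow> p \<in> C \<longleftrightarrow> q \<in> C"
  shows "y \<in> C"
proof -
  have "(x, y) \<in> (E \<union> E\<inverse>)\<^sup>*" using assms(1-3) unfolding dtree_def by blast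
  then show ?thesis
    by (induction rule: rtrancl_induct) (use assms(4) cl in auto)
qed

lemma arith5:
  fixes a b c s :: nat
  assumes "a + b + c = 1 + s" "s = c \<or> s = c + 1"
  shows "(a = 0 \<and> b = 1 \<and> s = c) \<or> (a = 1 \<and> b = 0 \<and> s = c)
      \<or> (a = 0 \<and> s = c + 1) \<or> (a = 1 \<and> b = 1 \<and> s = c + 1)
      \<or> (a = 2 \<and> b = 0 \<and> s = c + 1)"
proof (cases "s = c")
  case True then have "a + b = 1" using assms by simp
  then show ?thesis using True by auto
next
  case False then have "a + b = 2" "s = c + 1" using assms by auto
  then show ?thesis by auto
qed

locale AP =
  fixes V :: "'v set" and E :: "('v \<times> 'v) set"
    and tau :: "'v \<Rightarrow> aedge" and sigma :: "'v \<times> 'v \<Rightarrow> vtype"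
  assumes ap: "abstract_path V E tau sigma"
    and tl: "tree_like V tau"
    and gd: "good_path V E tau sigma"
begin

definition outd where "outd X v = card {e\<in>E. fst e = v \<and> sigma e = X}"
definition ind where "ind X v = card {e\<in>E. snd e = v \<and> sigma e = X}"
definition cnt where "cnt X = card {e\<in>E. sigma e = X}"

lemma dt: "dtree V E" using ap unfolding abstract_path_def by blast
lemma finV: "finite V" using dt unfolding dtree_def by blast
lemma EV: "E \<subseteq> V \<times> V" using dt unfolding dtree_def by blast
lemma finE: "finite E" using finV EV finite_subset by blast
lemma cardE: "card E + 1 = card V" using dt unfolding dtree_def by blast

lemma ent1_ge: "v \<in> V \<Longrightarrow> ent1 (tau v) X \<ge> ind X v"
  using ap unfolding abstract_path_def ind_def by blast
lemma ent2_ge: "v \<in> V \<Longrightarrow> ent2 (tau v) X \<ge> outd X v"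
  using ap unfolding abstract_path_def outd_def by blast
lemma isa: "v \<in> V \<Longrightarrow> is_aedge (tau v)"
  using ap unfolding abstract_path_def by blast
lemma tl1: "v \<in> V \<Longrightarrow> ent2 (tau v) Ot + ent2 (tau v) Ut + ent2 (tau v) St = 1"
  using tl unfolding tree_like_def by blast

lemma int_or_bd: "v \<in> V \<Longrightarrow> interior tau v \<or> boundary tau v"
  using isa[of v] unfolding is_aedge_def interior_def boundary_def by auto
lemma not_both: "interior tau v \<Longrightarrow> boundary tau v \<Longrightarrow> False"
  unfolding interior_def boundary_def by auto
lemma int_ent: "v \<in> V \<Longrightarrow> interior tau v \<Longrightarrow> ent1 (tau v) St = 0 \<and> ent2 (tau v) Ut = 0"
  using isa[of v] unfolding is_aedge_def interior_def by auto
lemma bd_ent: "v \<in> V \<Longrightarrow> boundary tau v \<Longrightarrow> ent1 (tau v) Ot = 0 \<and> ent2 (tau v) Ot = 0"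
  using isa[of v] unfolding is_aedge_def boundary_def by auto

lemma outd_pos: "e \<in> E \<Longrightarrow> outd (sigma e) (fst e) \<ge> 1"
proof -
  assume e: "e \<in> E"
  have "finite {e'\<in>E. fst e' = fst e \<and> sigma e' = sigma e}" using finE by simp
  moreover have "e \<in> {e'\<in>E. fst e' = fst e \<and> sigma e' = sigma e}" using e by simp
  ultimately show ?thesis unfolding outd_def
    by (metis (no_types, lifting) One_nat_def Suc_leI card_gt_0_iff empty_iff)
qed
lemma ind_pos: "e \<in> E \<Longrightarrow> ind (sigma e) (snd e) \<ge> 1"
proof -
  assume e: "e \<in> E"
  have "finite {e'\<in>E. snd e' = snd e \<and> sigma e' = sigma e}" using finE by simp
  moreover have "e \<in> {e'\<in>E. snd e' = snd e \<and> sigma e' = sigma e}" using e by simp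
  ultimately show ?thesis unfolding ind_def
    by (metis (no_types, lifting) One_nat_def Suc_leI card_gt_0_iff empty_iff)
qed

lemma eV: "e \<in> E \<Longrightarrow> fst e \<in> V \<and> snd e \<in> V" using EV by auto

lemma S_tgt: "e \<in> E \<Longrightarrow> sigma e = St \<Longrightarrow> boundary tau (snd e)"
  using ind_pos[of e] ent1_ge[of "snd e" St] int_ent[of "snd e"] int_or_bd[of "snd e"] eV[of e] by force
lemma U_src: "e \<in> E \<Longrightarrow> sigma e = Ut \<Longrightarrow> boundary tau (fst e)"
  using outd_pos[of e] ent2_ge[of "fst e" Ut] int_ent[of "fst e"] int_or_bd[of "fst e"] eV[of e] by force
lemma O_src: "e \<in> E \<Longrightarrow> sigma e = Ot \<Longrightarrow> interior tau (fst e)"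
  using outd_pos[of e] ent2_ge[of "fst e" Ot] bd_ent[of "fst e"] int_or_bd[of "fst e"] eV[of e] by force
lemma O_tgt: "e \<in> E \<Longrightarrow> sigma e = Ot \<Longrightarrow> interior tau (snd e)"
  using ind_pos[of e] ent1_ge[of "snd e" Ot] bd_ent[of "snd e"] int_or_bd[of "snd e"] eV[of e] by force

lemma outdeg_split: "card {e\<in>E. fst e = v} = outd Ot v + outd Ut v + outd St v"
proof -
  have "{e\<in>E. fst e = v} = {e\<in>E. fst e = v \<and> sigma e = Ot} \<union> {e\<in>E. fst e = v \<and> sigma e = Ut}
     \<union> {e\<in>E. fst e = v \<and> sigma e = St}" by (auto, metis vtype.exhaust)
  then show ?thesis unfolding outd_def using finE
    by (simp add: card_Un_disjoint disjoint_iff)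
qed

lemma outdeg_le: "v \<in> V \<Longrightarrow> card {e\<in>E. fst e = v} \<le> 1"
  using outdeg_split[of v] ent2_ge[of v] tl1[of v]
  by (metis add_mono)

lemma out_uniq: "e \<in> E \<Longrightarrow> e' \<in> E \<Longrightarrow> fst e = fst e' \<Longrightarrow> e = e'"
proof -
  assume a: "e \<in> E" "e' \<in> E" "fst e = fst e'"
  have "card {x\<in>E. fst x = fst e} \<le> Suc 0" using outdeg_le[of "fst e"] eV[OF a(1)] by simp
  moreover have "finite {x\<in>E. fst x = fst e}" using finE by simp
  ultimately have "\<forall>a1\<in>{x\<in>E. fst x = fst e}. \<forall>a2\<in>{x\<in>E. fst x = fst e}. a1 = a2"
    using card_le_Suc0_iff_eq by blast
  then show ?thesis using a by (cases e, cases e') auto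
qed

lemma sum_outd: "(\<Sum>v\<in>V. outd X v) = cnt X"
  unfolding outd_def cnt_def using sum_card_fst[OF finE EV finV, of "\<lambda>e. sigma e = X"] by simp
lemma sum_ind: "(\<Sum>v\<in>V. ind X v) = cnt X"
  unfolding ind_def cnt_def using sum_card_snd[OF finE EV finV, of "\<lambda>e. sigma e = X"] by simp
lemma sum_outdeg: "(\<Sum>v\<in>V. card {e\<in>E. fst e = v}) = card E"
  using sum_card_fst[OF finE EV finV, of "\<lambda>e. True"] by simp

lemma root_ex: "\<exists>r\<in>V. \<forall>e\<in>E. fst e \<noteq> r"
proof (rule ccontr)
  assume nt: "\<not> ?thesis"
  have "\<forall>v\<in>V. card {e\<in>E. fst e = v} \<ge> 1"
  proof
    fix v assume "v \<in> V"
    then obtain e where "e \<in> E" "fst e = v" using nt by blast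
    moreover have "finite {e\<in>E. fst e = v}" using finE by simp
    ultimately show "card {e\<in>E. fst e = v} \<ge> 1"
      by (metis (mono_tags, lifting) One_nat_def Suc_leI card_gt_0_iff empty_iff mem_Collect_eq)
  qed
  then have "(\<Sum>v\<in>V. card {e\<in>E. fst e = v}) \<ge> (\<Sum>v\<in>V. 1)" by (intro sum_mono) auto
  then show False using sum_outdeg cardE by simp
qed

lemma no_loop: "(x, x) \<notin> E"
proof
  assume lp: "(x, x) \<in> E"
  obtain r where r: "r \<in> V" "\<forall>e\<in>E. fst e \<noteq> r" using root_ex by blast
  let ?C = "{y. (y, x) \<in> E\<^sup>*}"
  have cl: "p \<in> ?C \<longleftrightarrow> q \<in> ?C" if pq: "(p, q) \<in> E" for p q
  proof
    assume "q \<in> ?C" then show "p \<in> ?C" using pq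
      by (metis converse_rtrancl_into_rtrancl mem_Collect_eq)
  next
    assume pC: "p \<in> ?C"
    show "q \<in> ?C"
    proof (cases "p = x")
      case True
      then have "(p, q) = (x, x)" using out_uniq[OF pq lp] by (simp only: fst_conv)
      then show ?thesis by blast
    next
      case False
      from pC have "(p, x) \<in> E\<^sup>*" by blast
      then obtain z where z: "(p, z) \<in> E" "(z, x) \<in> E\<^sup>*" using False
        by (cases rule: converse_rtranclE) blast+
      then have "(p, z) = (p, q)" using out_uniq[OF pq z(1)] by (simp only: fst_conv)
      then show ?thesis using z by blast
    qed
  qed
  have xV: "x \<in> V" using eV[OF lp] by simp
  have xC: "x \<in> ?C" by blast
  have "r \<in> ?C" by (rule closure_conn[OF dt xV r(1) xC]) (rule cl)
  then have "(r, x) \<in> E\<^sup>*" by blast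
  then show False
  proof (cases rule: converse_rtranclE)
    case base then show False using r lp by (metis fst_conv)
  next
    case (step z) then show False using r by (metis fst_conv)
  qed
qed

lemma ent1S: "v \<in> V \<Longrightarrow> ent1 (tau v) St = ind St v"
proof -
  assume vV: "v \<in> V"
  have "(\<Sum>v\<in>V. int (ent1 (tau v) St)) = int (cnt St)"
    using gd unfolding good_path_def end1_def cnt_def by simp
  then have "(\<Sum>v\<in>V. ent1 (tau v) St) = (\<Sum>v\<in>V. ind St v)" using sum_ind
    by (metis of_nat_eq_iff of_nat_sum)
  then have "(\<Sum>v\<in>V. ent1 (tau v) St - ind St v) = 0"
    using sum_subtractf_nat[of V "\<lambda>v. ind St v" "\<lambda>v. ent1 (tau v) St"] ent1_ge by simp
  then show ?thesis using vV finV ent1_ge[OF vV, of St] by (simp add: sum_eq_0_iff le_antisym)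
qed

definition Bd where "Bd = {v\<in>V. boundary tau v}"
definition su2 where "su2 = (\<Sum>v\<in>V. ent2 (tau v) Ut)"
definition so2 where "so2 = (\<Sum>v\<in>V. ent2 (tau v) Ot)"

lemma cnt_split: "cnt Ot + cnt Ut + cnt St = card E"
proof -
  have "E = {e\<in>E. sigma e = Ot} \<union> {e\<in>E. sigma e = Ut} \<union> {e\<in>E. sigma e = St}"
    by (auto, metis vtype.exhaust)
  then have "card E = card ({e\<in>E. sigma e = Ot} \<union> {e\<in>E. sigma e = Ut} \<union> {e\<in>E. sigma e = St})"
    by simp
  also have "\<dots> = cnt Ot + cnt Ut + cnt St" unfolding cnt_def using finE
    by (simp add: card_Un_disjoint disjoint_iff)
  finally show ?thesis by simp
qed

lemma sum_s2: "(\<Sum>v\<in>V. ent2 (tau v) St) = cnt St"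
proof -
  have "(\<Sum>v\<in>V. int (ent2 (tau v) St)) = int (cnt St)"
    using gd unfolding good_path_def end2_def cnt_def by simp
  then show ?thesis by (metis of_nat_eq_iff of_nat_sum)
qed

lemma sum_s1: "(\<Sum>v\<in>V. ent1 (tau v) St) = cnt St"
  using ent1S sum_ind by simp

lemma su2_ge: "su2 \<ge> cnt Ut"
  unfolding su2_def using sum_outd[of Ut] ent2_ge sum_mono by metis
lemma so2_ge: "so2 \<ge> cnt Ot"
  unfolding so2_def using sum_outd[of Ot] ent2_ge sum_mono by metis

lemma so2_su2: "so2 + su2 = cnt Ot + cnt Ut + 1"
proof -
  have "(\<Sum>v\<in>V. ent2 (tau v) Ot + ent2 (tau v) Ut + ent2 (tau v) St) = card V"
    using tl1 by simp
  then have "so2 + su2 + cnt St = card V" unfolding so2_def su2_def using sum_s2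
    by (simp add: sum.distrib)
  then show ?thesis using cardE cnt_split by simp
qed

lemma finBd: "finite Bd" unfolding Bd_def using finV by simp

lemma su2_Bd: "su2 = (\<Sum>v\<in>Bd. ent2 (tau v) Ut)"
  unfolding su2_def Bd_def
  by (rule sum.mono_neutral_right[OF finV]) (use int_ent int_or_bd in fastforce)+

lemma weight_key:
  assumes "path_weight V tau = 2"
  shows "int (card Bd) + int (cnt Ot) = 1 + int su2 - int (cnt Ut)"
proof -
  have w: "aedge_weight (tau v) = 1 + (if boundary tau v then 1 else 0)
      - int (ent1 (tau v) St) - int (ent2 (tau v) Ut)" if "v \<in> V" for v
    using int_ent[OF that] int_or_bd[OF that] not_both[of v]
    unfolding aedge_weight_def interior_def boundary_def by auto
  have "2 = (\<Sum>v\<in>V. 1 + (if boundary tau v then 1 else 0)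
      - int (ent1 (tau v) St) - int (ent2 (tau v) Ut))"
    using assms unfolding path_weight_def using w by simp
  also have "\<dots> = int (card V) + (\<Sum>v\<in>V. (if boundary tau v then 1 else 0))
      - int (\<Sum>v\<in>V. ent1 (tau v) St) - int su2"
    unfolding su2_def by (simp add: sum.distrib sum_subtractf)
  also have "(\<Sum>v\<in>V. (if boundary tau v then 1 else 0)) = int (card Bd)"
    unfolding Bd_def using finV by (simp add: sum.If_cases Int_def)
  finally have "2 = int (card V) + int (card Bd) - int (cnt St) - int su2"
    using sum_s1 by simp
  then show ?thesis using cardE cnt_split by simp
qed

lemma legal_char:
  assumes bV: "b \<in> V" and bb: "boundary tau b"
  shows "legal (star_o V E tau b) (sub_arrows E (star_o V E tau b)) tau sigma \<longleftrightarrow>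
    ent1 (tau b) St = card {e\<in>E. sigma e = St \<and> snd e = b \<and> interior tau (fst e)} \<and>
    ent2 (tau b) Ut = card {e\<in>E. sigma e = Ut \<and> fst e = b \<and> interior tau (snd e)}"
proof -
  define R where "R = {w\<in>V. ((b, w) \<in> E \<or> (w, b) \<in> E) \<and> interior tau w}"
  have st: "star_o V E tau b = insert b R" unfolding star_o_def R_def by simp
  have finR: "finite R" unfolding R_def using finV by simp
  have bR: "b \<notin> R" unfolding R_def using bb not_both by blast
  have s1: "(\<Sum>v\<in>insert b R. int (ent1 (tau v) St)) = int (ent1 (tau b) St)"
  proof -
    have "(\<Sum>v\<in>R. int (ent1 (tau v) St)) = 0"
      by (rule sum.neutral) (use int_ent R_def in auto)
    then show ?thesis using finR bR by simp
  qed
  have u2: "(\<Sum>v\<in>insert b R. int (ent2 (tau v) Ut)) = int (ent2 (tau b) Ut)"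
  proof -
    have "(\<Sum>v\<in>R. int (ent2 (tau v) Ut)) = 0"
      by (rule sum.neutral) (use int_ent R_def in auto)
    then show ?thesis using finR bR by simp
  qed
  have A1: "{e\<in>sub_arrows E (insert b R). sigma e = St} =
      {e\<in>E. sigma e = St \<and> snd e = b \<and> interior tau (fst e)}"
  proof (rule set_eqI, rule iffI)
    fix e assume e: "e \<in> {e\<in>sub_arrows E (insert b R). sigma e = St}"
    then have eE: "e \<in> E" "sigma e = St" "fst e \<in> insert b R" "snd e \<in> insert b R"
      unfolding sub_arrows_def by (auto simp: mem_Times_iff)
    have "boundary tau (snd e)" using S_tgt eE by blast
    then have sb: "snd e = b" using eE(4) unfolding R_def using not_both by blast
    have "fst e \<noteq> b" using no_loop eE(1) sb by (metis prod.collapse)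
    then have "interior tau (fst e)" using eE(3) unfolding R_def by blast
    then show "e \<in> {e\<in>E. sigma e = St \<and> snd e = b \<and> interior tau (fst e)}" using eE sb by blast
  next
    fix e assume e: "e \<in> {e\<in>E. sigma e = St \<and> snd e = b \<and> interior tau (fst e)}"
    then have "fst e \<in> R" unfolding R_def using eV[of e] by (metis (mono_tags, lifting) mem_Collect_eq prod.collapse)
    then show "e \<in> {e\<in>sub_arrows E (insert b R). sigma e = St}"
      using e unfolding sub_arrows_def by (auto simp: mem_Times_iff)
  qed
  have A2: "{e\<in>sub_arrows E (insert b R). sigma e = Ut} =
      {e\<in>E. sigma e = Ut \<and> fst e = b \<and> interior tau (snd e)}"
  proof (rule set_eqI, rule iffI)
    fix e assume e: "e \<in> {e\<in>sub_arrows E (insert b R). sigma e = Ut}"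
    then have eE: "e \<in> E" "sigma e = Ut" "fst e \<in> insert b R" "snd e \<in> insert b R"
      unfolding sub_arrows_def by (auto simp: mem_Times_iff)
    have "boundary tau (fst e)" using U_src eE by blast
    then have sb: "fst e = b" using eE(3) unfolding R_def using not_both by blast
    have "snd e \<noteq> b" using no_loop eE(1) sb by (metis prod.collapse)
    then have "interior tau (snd e)" using eE(4) unfolding R_def by blast
    then show "e \<in> {e\<in>E. sigma e = Ut \<and> fst e = b \<and> interior tau (snd e)}" using eE sb by blast
  next
    fix e assume e: "e \<in> {e\<in>E. sigma e = Ut \<and> fst e = b \<and> interior tau (snd e)}"
    then have "snd e \<in> R" unfolding R_def using eV[of e] by (metis (mono_tags, lifting) mem_Collect_eq prod.collapse)
    then show "e \<in> {e\<in>sub_arrows E (insert b R). sigma e = Ut}"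
      using e unfolding sub_arrows_def by (auto simp: mem_Times_iff)
  qed
  show ?thesis unfolding legal_def end1_def end2_def st s1 u2 A1 A2 by simp
qed

definition BB where "BB = {e\<in>E. boundary tau (fst e) \<and> boundary tau (snd e)}"
definition LB where "LB = {b\<in>V. boundary tau b \<and>
   legal (star_o V E tau b) (sub_arrows E (star_o V E tau b)) tau sigma}"

lemma markers_card: "card (gluing_markers V E tau sigma) = cnt Ot + card BB + card LB"
proof -
  have IA: "{e\<in>E. interior tau (fst e) \<and> interior tau (snd e)} = {e\<in>E. sigma e = Ot}"
  proof (rule set_eqI, rule iffI)
    fix e assume e: "e \<in> {e\<in>E. interior tau (fst e) \<and> interior tau (snd e)}"
    have "sigma e \<noteq> Ut" using e U_src not_both by blast
    moreover have "sigma e \<noteq> St" using e S_tgt not_both by blast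
    ultimately show "e \<in> {e\<in>E. sigma e = Ot}" using e by (cases "sigma e") auto
  next
    fix e assume "e \<in> {e\<in>E. sigma e = Ot}"
    then show "e \<in> {e\<in>E. interior tau (fst e) \<and> interior tau (snd e)}" using O_src O_tgt by blast
  qed
  have gm: "gluing_markers V E tau sigma = Inl ` LB \<union> (Inr ` {e\<in>E. sigma e = Ot} \<union> Inr ` BB)"
    unfolding gluing_markers_def LB_def BB_def IA[symmetric] by blast
  have f1: "finite LB" unfolding LB_def using finV by simp
  have f2: "finite BB" unfolding BB_def using finE by simp
  have f3: "finite {e\<in>E. sigma e = Ot}" using finE by simp
  have d: "{e\<in>E. sigma e = Ot} \<inter> BB = {}" unfolding BB_def using O_src not_both by blast
  have "card (gluing_markers V E tau sigma) = card (Inl ` LB :: ('v + ('v \<times> 'v)) set) + card (Inr ` {e\<in>E. sigma e = Ot} \<union> Inr ` BB :: ('v + ('v \<times> 'v)) set)"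
    unfolding gm
    using f1 f2 f3 by (subst card_Un_disjoint) auto
  also have "card (Inr ` {e\<in>E. sigma e = Ot} \<union> Inr ` BB :: ('v + ('v \<times> 'v)) set) = card (Inr ` ({e\<in>E. sigma e = Ot} \<union> BB) :: ('v + ('v \<times> 'v)) set)"
    by (simp add: image_Un)
  also have "\<dots> = card ({e\<in>E. sigma e = Ot} \<union> BB)" by (rule card_image) simp
  also have "\<dots> = cnt Ot + card BB" unfolding cnt_def using card_Un_disjoint[OF f3 f2 d] by simp
  also have "card (Inl ` LB :: ('v + ('v \<times> 'v)) set) = card LB" by (rule card_image) simp
  finally show ?thesis by simp
qed

lemma gb_card: "card (good_breaks E sigma) = cnt Ot + cnt Ut"
proof -
  have "good_breaks E sigma = {e\<in>E. sigma e = Ot} \<union> {e\<in>E. sigma e = Ut}"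
    unfolding good_breaks_def by auto
  then show ?thesis unfolding cnt_def using finE by (simp add: card_Un_disjoint disjoint_iff)
qed

lemma cnt0: "cnt X = 0 \<Longrightarrow> e \<in> E \<Longrightarrow> sigma e \<noteq> X"
proof
  assume "cnt X = 0" "e \<in> E" "sigma e = X"
  moreover have "finite {e\<in>E. sigma e = X}" using finE by simp
  ultimately have "{e\<in>E. sigma e = X} = {}" unfolding cnt_def by simp
  then show False using \<open>e \<in> E\<close> \<open>sigma e = X\<close> by blast
qed
lemma cnt1: "cnt X = 1 \<Longrightarrow> \<exists>e0. {e\<in>E. sigma e = X} = {e0}"
  unfolding cnt_def by (simp add: card_1_singleton_iff)
lemma out_ent: "e \<in> E \<Longrightarrow> ent2 (tau (fst e)) (sigma e) \<ge> 1"
  using outd_pos ent2_ge eV by (meson order.trans)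
lemma ent2_bd: "v \<in> V \<Longrightarrow> boundary tau v \<Longrightarrow> ent2 (tau v) Ut + ent2 (tau v) St = 1"
  using tl1 bd_ent by fastforce
lemma u2_le: "v \<in> V \<Longrightarrow> ent2 (tau v) Ut \<le> 1"
  using tl1[of v] by linarith
lemma notBd: "v \<in> V \<Longrightarrow> v \<notin> Bd \<Longrightarrow> interior tau v"
  unfolding Bd_def using int_or_bd by blast
lemma Bd_V: "v \<in> Bd \<Longrightarrow> v \<in> V \<and> boundary tau v" unfolding Bd_def by blast
lemma no_loop': "e \<in> E \<Longrightarrow> fst e \<noteq> snd e"
  using no_loop by (metis prod.collapse)

lemma legal_S:
  assumes "b \<in> V" "\<And>e. e \<in> E \<Longrightarrow> sigma e = St \<Longrightarrow> snd e = b \<Longrightarrow> interior tau (fst e)"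
  shows "ent1 (tau b) St = card {e\<in>E. sigma e = St \<and> snd e = b \<and> interior tau (fst e)}"
proof -
  have "{e\<in>E. sigma e = St \<and> snd e = b \<and> interior tau (fst e)} = {e\<in>E. snd e = b \<and> sigma e = St}"
    using assms(2) by blast
  then show ?thesis using ent1S[OF assms(1)] unfolding ind_def by simp
qed

lemma two_roots:
  assumes "p \<in> V" "q \<in> V" "p \<noteq> q" "\<forall>e\<in>E. fst e \<noteq> p" "\<forall>e\<in>E. fst e \<noteq> q"
  shows False
proof -
  have z: "card {e\<in>E. fst e = v} = 0" if "v \<in> {p, q}" for v
  proof -
    have "{e\<in>E. fst e = v} = {}" using that assms(4,5) by blast
    then show ?thesis by (simp only: card.empty)
  qed
  have "card E = (\<Sum>v\<in>V. card {e\<in>E. fst e = v})" using sum_outdeg by simp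
  also have "\<dots> = (\<Sum>v\<in>V - {p, q}. card {e\<in>E. fst e = v})"
    by (rule sum.mono_neutral_right[OF finV]) (use z in auto)
  also have "\<dots> \<le> (\<Sum>v\<in>V - {p, q}. 1)" by (rule sum_mono) (use outdeg_le in auto)
  also have "\<dots> = card V - 2" using assms(1-3) finV by (simp add: card_Diff_subset)
  finally have "card E \<le> card V - 2" .
  moreover have "card {p, q} \<le> card V" by (rule card_mono[OF finV]) (use assms in auto)
  ultimately show False using cardE assms(3) by simp
qed

lemma LB_mem: "b \<in> V \<Longrightarrow> boundary tau b \<Longrightarrow> b \<in> LB \<longleftrightarrow>
    ent1 (tau b) St = card {e\<in>E. sigma e = St \<and> snd e = b \<and> interior tau (fst e)} \<and>
    ent2 (tau b) Ut = card {e\<in>E. sigma e = Ut \<and> fst e = b \<and> interior tau (snd e)}"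
  unfolding LB_def using legal_char by blast

lemma main:
  assumes w: "path_weight V tau = 2"
  shows "cnt Ot + cnt Ut \<le> 1 \<and> (cnt Ot + cnt Ut = 1 \<longrightarrow> cnt Ot + card BB + card LB = 1)
     \<and> (cnt Ot + cnt Ut = 0 \<longrightarrow> cnt Ot + card BB + card LB = 2)"
proof -
  have wk: "int (card Bd) + int (cnt Ot) = 1 + int su2 - int (cnt Ut)" using weight_key[OF w] .
  have e1: "su2 \<le> cnt Ut + 1" using so2_su2 so2_ge by linarith
  have e2: "su2 \<ge> cnt Ut" by (rule su2_ge)
  have LB_Bd: "LB \<subseteq> Bd" unfolding LB_def Bd_def by blast
  have BB_Bd: "e \<in> BB \<Longrightarrow> e \<in> E \<and> fst e \<in> Bd \<and> snd e \<in> Bd" for e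
    unfolding BB_def Bd_def using eV by blast
  consider (A) "card Bd = 0" "cnt Ot = 1" "su2 = cnt Ut"
    | (B) "card Bd = 1" "cnt Ot = 0" "su2 = cnt Ut"
    | (C) "card Bd = 0" "su2 = cnt Ut + 1"
    | (D) "card Bd = 1" "cnt Ot = 1" "su2 = cnt Ut + 1"
    | (E) "card Bd = 2" "cnt Ot = 0" "su2 = cnt Ut + 1"
  proof -
    have k: "card Bd + cnt Ot + cnt Ut = 1 + su2" using wk e2 by linarith
    have s: "su2 = cnt Ut \<or> su2 = cnt Ut + 1" using e1 e2 by linarith
    have "(card Bd = 0 \<and> cnt Ot = 1 \<and> su2 = cnt Ut) \<or> (card Bd = 1 \<and> cnt Ot = 0 \<and> su2 = cnt Ut)
      \<or> (card Bd = 0 \<and> su2 = cnt Ut + 1) \<or> (card Bd = 1 \<and> cnt Ot = 1 \<and> su2 = cnt Ut + 1)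
      \<or> (card Bd = 2 \<and> cnt Ot = 0 \<and> su2 = cnt Ut + 1)" using arith5[OF k s] .
    then show ?thesis by (elim disjE conjE) (simp add: that)+
  qed
  then show ?thesis
  proof cases
    case A
    then have Bd0: "Bd = {}" using finBd by simp
    have "{e\<in>E. sigma e = Ut} = {}" using U_src Bd0 eV unfolding Bd_def by blast
    then have "cnt Ut = 0" unfolding cnt_def by (simp only: card.empty)
    moreover have "BB = {}" using BB_Bd Bd0 by blast
    moreover have "LB = {}" using LB_Bd Bd0 by blast
    ultimately show ?thesis using A by simp
  next
    case B
    obtain b where Bb: "Bd = {b}" using B(1) card_1_singleton_iff by (metis One_nat_def)
    have bV: "b \<in> V" "boundary tau b" using Bb Bd_V by auto
    have su: "su2 = ent2 (tau b) Ut" using su2_Bd Bb by simp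
    have inB: "interior tau v" if "v \<in> V" "v \<noteq> b" for v using notBd Bb that by blast
    have U1: "cnt Ut = 1"
    proof (rule ccontr)
      assume "cnt Ut \<noteq> 1"
      then have U0: "cnt Ut = 0" and u0: "ent2 (tau b) Ut = 0" using B su u2_le[OF bV(1)] by linarith+
      have "so2 = 1" using so2_su2 B U0 su u0 by simp
      have "\<exists>a\<in>V. ent2 (tau a) Ot \<noteq> 0"
      proof (rule ccontr)
        assume "\<not> (\<exists>a\<in>V. ent2 (tau a) Ot \<noteq> 0)"
        then have "so2 = 0" unfolding so2_def by simp
        then show False using \<open>so2 = 1\<close> by simp
      qed
      then obtain a where aV: "a \<in> V" and ao: "ent2 (tau a) Ot \<noteq> 0" by blast
      have ai: "interior tau a" using ao bd_ent[OF aV] int_or_bd[OF aV] by auto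
      have ab: "a \<noteq> b" using ai bV(2) not_both by blast
      have as: "ent2 (tau a) St = 0" using tl1[OF aV] ao by linarith
      have na: "fst e \<noteq> a \<and> snd e \<noteq> a" if eE: "e \<in> E" for e
      proof -
        have "sigma e \<noteq> Ot" using cnt0 B(2) eE by blast
        moreover have "sigma e \<noteq> Ut" using cnt0 U0 eE by blast
        ultimately have "sigma e = St" by (cases "sigma e") auto
        then show ?thesis using out_ent[OF eE] as S_tgt[OF eE] ai not_both by auto
      qed
      have "b \<in> {a}"
      proof (rule closure_conn[OF dt aV bV(1)])
        show "a \<in> {a}" by simp
      next
        fix p q assume "(p, q) \<in> E"
        then have "p \<noteq> a" "q \<noteq> a" using na[of "(p, q)"] by auto
        then show "p \<in> {a} \<longleftrightarrow> q \<in> {a}" by simp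
      qed
      then show False using ab by simp
    qed
    have BB0: "BB = {}"
    proof (rule equals0I)
      fix e assume "e \<in> BB"
      then have "e \<in> E" "fst e = b" "snd e = b" using BB_Bd Bb by blast+
      then show False using no_loop' by metis
    qed
    have Uset: "{e\<in>E. sigma e = Ut \<and> fst e = b \<and> interior tau (snd e)} = {e\<in>E. sigma e = Ut}"
    proof (rule set_eqI, rule iffI)
      fix e assume "e \<in> {e\<in>E. sigma e = Ut}"
      then have eE: "e \<in> E" "sigma e = Ut" by auto
      have "fst e \<in> Bd" using U_src[OF eE] eV[OF eE(1)] unfolding Bd_def by blast
      then have f: "fst e = b" using Bb by blast
      then have "snd e \<noteq> b" using no_loop'[OF eE(1)] by simp
      then have "interior tau (snd e)" using inB eV[OF eE(1)] by blast
      then show "e \<in> {e\<in>E. sigma e = Ut \<and> fst e = b \<and> interior tau (snd e)}" using eE f by blast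
    qed blast
    have "b \<in> LB"
      unfolding LB_mem[OF bV] Uset
    proof
      show "ent1 (tau b) St = card {e\<in>E. sigma e = St \<and> snd e = b \<and> interior tau (fst e)}"
      proof (rule legal_S[OF bV(1)])
        fix e assume "e \<in> E" "sigma e = St" "snd e = b"
        then have "fst e \<noteq> b" "fst e \<in> V" using no_loop' eV by auto
        then show "interior tau (fst e)" using inB by blast
      qed
      show "ent2 (tau b) Ut = card {e\<in>E. sigma e = Ut}" using su B U1 unfolding cnt_def by simp
    qed
    then have "LB = {b}" using LB_Bd Bb by blast
    then show ?thesis using B BB0 U1 by simp
  next
    case C
    then have Bd0: "Bd = {}" using finBd by simp
    then have "su2 = 0" using su2_Bd by simp
    then show ?thesis using C by simp
  next
    case D
    obtain b where Bb: "Bd = {b}" using D(1) card_1_singleton_iff by (metis One_nat_def)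
    have bV: "b \<in> V" "boundary tau b" using Bb Bd_V by auto
    have su: "su2 = ent2 (tau b) Ut" using su2_Bd Bb by simp
    have U0: "cnt Ut = 0" and u1: "ent2 (tau b) Ut = 1" using D su u2_le[OF bV(1)] by linarith+
    have BB0: "BB = {}"
    proof (rule equals0I)
      fix e assume "e \<in> BB"
      then have "e \<in> E" "fst e = b" "snd e = b" using BB_Bd Bb by blast+
      then show False using no_loop' by metis
    qed
    have "{e\<in>E. sigma e = Ut \<and> fst e = b \<and> interior tau (snd e)} = {}" using cnt0[OF U0] by blast
    then have Z: "card {e\<in>E. sigma e = Ut \<and> fst e = b \<and> interior tau (snd e)} = 0" by (simp only: card.empty)
    have "b \<notin> LB" unfolding LB_mem[OF bV] using u1 Z by simp
    then have "LB = {}" using LB_Bd Bb by auto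
    then show ?thesis using D BB0 U0 by simp
  next
    case E
    obtain b1 b2 where Bb: "Bd = {b1, b2}" "b1 \<noteq> b2" using card_2_iff[THEN iffD1, OF E(1)] by blast
    have su: "su2 = ent2 (tau b1) Ut + ent2 (tau b2) Ut" unfolding su2_Bd Bb(1) using Bb(2) by simp
    have "b1 \<in> Bd" "b2 \<in> Bd" unfolding Bb(1) by simp_all
    then have b1V: "b1 \<in> V" and b2V: "b2 \<in> V" using Bd_V by blast+
    have Ule: "cnt Ut \<le> 1" using su E u2_le[OF b1V] u2_le[OF b2V] by linarith
    have O0: "e \<in> E \<Longrightarrow> sigma e \<noteq> Ot" for e using cnt0 E(2) by blast
    consider (E1) "cnt Ut = 1" | (E0) "cnt Ut = 0" using Ule by linarith
    then show ?thesis
    proof cases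
      case E1
      obtain e0 where U1: "{e\<in>E. sigma e = Ut} = {e0}" using cnt1[OF E1] by blast
      have e0E: "e0 \<in> E" "sigma e0 = Ut" using U1 by auto
      define p where "p = fst e0"
      have pB: "p \<in> Bd" unfolding p_def Bd_def using U_src[OF e0E] eV[OF e0E(1)] by blast
      obtain q where pq: "Bd = {p, q}" "p \<noteq> q"
      proof (cases "p = b1")
        case True then show ?thesis using that Bb by blast
      next
        case False then have "p = b2" using pB Bb by blast
        then show ?thesis using that[of b1] Bb by (simp add: insert_commute)
      qed
      have pV: "p \<in> V" "boundary tau p" and qV: "q \<in> V" "boundary tau q" using pq Bd_V by auto
      have inB: "interior tau v" if "v \<in> V" "v \<noteq> p" "v \<noteq> q" for v using notBd pq that by blast
      have su': "su2 = ent2 (tau p) Ut + ent2 (tau q) Ut" using su2_Bd pq by simp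
      have up: "ent2 (tau p) Ut = 1" and uq: "ent2 (tau q) Ut = 1"
        using su' E E1 u2_le[OF pV(1)] u2_le[OF qV(1)] by linarith+
      have sq: "ent2 (tau q) St = 0" using ent2_bd[OF qV] uq by simp
      have Uonly: "e \<in> E \<Longrightarrow> sigma e = Ut \<Longrightarrow> e = e0" for e using U1 by blast
      have qn: "fst e \<noteq> q" if eE: "e \<in> E" for e
      proof
        assume fq: "fst e = q"
        have "sigma e \<noteq> Ot" using O0 eE by blast
        moreover have "sigma e \<noteq> Ut"
        proof
          assume "sigma e = Ut" then have "e = e0" using Uonly eE by blast
          then show False using fq pq(2) p_def by simp
        qed
        moreover have "sigma e \<noteq> St" using out_ent[OF eE] fq sq by auto
        ultimately show False by (cases "sigma e") auto
      qed
      have Uq: "card {e\<in>E. sigma e = Ut \<and> fst e = q \<and> interior tau (snd e)} = 0"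
      proof -
        have "{e\<in>E. sigma e = Ut \<and> fst e = q \<and> interior tau (snd e)} = {}" using qn by blast
        then show ?thesis by (simp only: card.empty)
      qed
      have qL: "q \<notin> LB" unfolding LB_mem[OF qV] using uq Uq by simp
      have BBs: "e \<in> BB \<Longrightarrow> e = (p, q)" for e
      proof -
        assume "e \<in> BB"
        then have eE: "e \<in> E" and "fst e \<in> {p, q}" "snd e \<in> {p, q}" using BB_Bd pq by auto
        moreover have "fst e \<noteq> q" using qn eE by blast
        moreover have "fst e \<noteq> snd e" using no_loop' eE by blast
        ultimately show "e = (p, q)" by (cases e) auto
      qed
      have Sint: "interior tau (fst e)" if "e \<in> E" "sigma e = St" "snd e = p" for e
      proof -
        have "fst e \<noteq> p" "fst e \<in> V" using no_loop' eV that by auto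
        moreover have "fst e \<noteq> q" using qn that by blast
        ultimately show ?thesis using inB by blast
      qed
      show ?thesis
      proof (cases "snd e0 = q")
        case True
        have e0pq: "e0 = (p, q)" using True p_def by (cases e0) simp
        have "BB = {e0}"
        proof
          show "BB \<subseteq> {e0}" using BBs e0pq by blast
          show "{e0} \<subseteq> BB" unfolding BB_def using e0E e0pq pV qV by auto
        qed
        then have cBB: "card BB = 1" by simp
        have "{e\<in>E. sigma e = Ut \<and> fst e = p \<and> interior tau (snd e)} = {}"
          using Uonly True qV(2) not_both by blast
        then have Z: "card {e\<in>E. sigma e = Ut \<and> fst e = p \<and> interior tau (snd e)} = 0"
          by (simp only: card.empty)
        have "p \<notin> LB" unfolding LB_mem[OF pV] using up Z by simp
        then have "LB = {}" using LB_Bd pq qL by auto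
        then show ?thesis using E E1 cBB by simp
      next
        case False
        have "snd e0 \<noteq> p" using no_loop' e0E p_def by metis
        then have s0: "interior tau (snd e0)" using inB eV[OF e0E(1)] False by blast
        have "BB = {}"
        proof (rule equals0I)
          fix e assume "e \<in> BB"
          then have "e = (p, q)" "e \<in> E" using BBs BB_def by auto
          then have "e = e0" using out_uniq[OF _ e0E(1)] p_def by simp
          then show False using \<open>e = (p, q)\<close> False by (metis snd_conv)
        qed
        then have cBB: "card BB = 0" by simp
        have "{e\<in>E. sigma e = Ut \<and> fst e = p \<and> interior tau (snd e)} = {e0}"
          using Uonly e0E p_def s0 by blast
        then have O1: "card {e\<in>E. sigma e = Ut \<and> fst e = p \<and> interior tau (snd e)} = 1" by simp
        have "p \<in> LB" unfolding LB_mem[OF pV]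
        proof
          show "ent1 (tau p) St = card {e\<in>E. sigma e = St \<and> snd e = p \<and> interior tau (fst e)}"
            by (rule legal_S[OF pV(1)]) (rule Sint)
          show "ent2 (tau p) Ut = card {e\<in>E. sigma e = Ut \<and> fst e = p \<and> interior tau (snd e)}"
            using up O1 by simp
        qed
        then have "LB = {p}" using LB_Bd pq qL by auto
        then show ?thesis using E E1 cBB by simp
      qed
    next
      case E0
      have U0: "e \<in> E \<Longrightarrow> sigma e \<noteq> Ut" for e using cnt0 E0 by blast
      have s1: "ent2 (tau b1) Ut + ent2 (tau b2) Ut = 1" using su E E0 by simp
      obtain p q where pq: "Bd = {p, q}" "p \<noteq> q" and up: "ent2 (tau p) Ut = 0" and uq: "ent2 (tau q) Ut = 1"
      proof (cases "ent2 (tau b1) Ut = 0")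
        case True then show ?thesis using that[of b1 b2] Bb s1 by simp
      next
        case False
        then have "ent2 (tau b2) Ut = 0" "ent2 (tau b1) Ut = 1" using s1 by auto
        then show ?thesis using that[of b2 b1] Bb by (simp add: insert_commute)
      qed
      have pV: "p \<in> V" "boundary tau p" and qV: "q \<in> V" "boundary tau q" using pq Bd_V by auto
      have inB: "interior tau v" if "v \<in> V" "v \<noteq> p" "v \<noteq> q" for v using notBd pq that by blast
      have sq: "ent2 (tau q) St = 0" using ent2_bd[OF qV] uq by simp
      have qn: "fst e \<noteq> q" if eE: "e \<in> E" for e
      proof
        assume fq: "fst e = q"
        have "sigma e \<noteq> Ot" using O0 eE by blast
        moreover have "sigma e \<noteq> Ut" using U0 eE by blast
        moreover have "sigma e \<noteq> St" using out_ent[OF eE] fq sq by auto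
        ultimately show False by (cases "sigma e") auto
      qed
      have "\<exists>e\<in>E. fst e = p"
      proof (rule ccontr)
        assume "\<not> (\<exists>e\<in>E. fst e = p)"
        then show False using two_roots[OF pV(1) qV(1) pq(2)] qn by blast
      qed
      then obtain e0 where e0E: "e0 \<in> E" "fst e0 = p" by blast
      have "sigma e0 = St" using O0[OF e0E(1)] U0[OF e0E(1)] by (cases "sigma e0") auto
      then have "snd e0 \<in> Bd" using S_tgt e0E eV unfolding Bd_def by blast
      moreover have "snd e0 \<noteq> p" using no_loop' e0E by metis
      ultimately have "snd e0 = q" using pq by blast
      then have e0pq: "e0 = (p, q)" using e0E by (cases e0) auto
      have "BB = {e0}"
      proof
        show "BB \<subseteq> {e0}"
        proof
          fix e assume "e \<in> BB"
          then have eE: "e \<in> E" and "fst e \<in> {p, q}" using BB_Bd pq by auto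
          then have "fst e = p" using qn by blast
          then show "e \<in> {e0}" using out_uniq[OF eE e0E(1)] e0E by simp
        qed
        show "{e0} \<subseteq> BB" unfolding BB_def using e0E e0pq pV qV by auto
      qed
      then have cBB: "card BB = 1" by simp
      have Z: "card {e\<in>E. sigma e = Ut \<and> fst e = x \<and> interior tau (snd e)} = 0" for x
      proof -
        have "{e\<in>E. sigma e = Ut \<and> fst e = x \<and> interior tau (snd e)} = {}" using U0 by blast
        then show ?thesis by (simp only: card.empty)
      qed
      have qL: "q \<notin> LB" unfolding LB_mem[OF qV] using uq Z by simp
      have Sint: "interior tau (fst e)" if "e \<in> E" "sigma e = St" "snd e = p" for e
      proof -
        have "fst e \<noteq> p" "fst e \<in> V" using no_loop' eV that by auto
        moreover have "fst e \<noteq> q" using qn that by blast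
        ultimately show ?thesis using inB by blast
      qed
      have "p \<in> LB" unfolding LB_mem[OF pV]
      proof
        show "ent1 (tau p) St = card {e\<in>E. sigma e = St \<and> snd e = p \<and> interior tau (fst e)}"
          by (rule legal_S[OF pV(1)]) (rule Sint)
        show "ent2 (tau p) Ut = card {e\<in>E. sigma e = Ut \<and> fst e = p \<and> interior tau (snd e)}"
          using up Z by simp
      qed
      then have "LB = {p}" using LB_Bd pq qL by auto
      then show ?thesis using E E0 cBB by simp
    qed
  qed
qed

end

theorem corollary3p17:
  fixes V :: "'v set" and E :: "('v \<times> 'v) set"
    and tau :: "'v \<Rightarrow> aedge" and sigma :: "'v \<times> 'v \<Rightarrow> vtype"
  assumes "abstract_path V E tau sigma"
    and "tree_like V tau"
    and "good_path V E tau sigma"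
    and "path_weight V tau = 2"
  shows "card (good_breaks E sigma) \<le> 1
    \<and> (card (good_breaks E sigma) = 1 \<longrightarrow> card (gluing_markers V E tau sigma) = 1)
    \<and> (card (good_breaks E sigma) = 0 \<longrightarrow> card (gluing_markers V E tau sigma) = 2)"
proof -
  interpret AP V E tau sigma using assms(1-3) by unfold_locales
  show ?thesis unfolding gb_card markers_card using main[OF assms(4)] by simp
qed

end
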